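(* Let $b(z)=\prod_{j=1}^nb_{\alpha_j}(z)$ be a finite Blaschke product, $b_{\alpha_j}(z)=\frac{z-\alpha_j}{1-\bar\alpha_jz}$, $\alpha_j\in\mathbb{D}$, and let $\epsilon(b)=\min\{1-|\alpha_j|:1\le j\le n\}$. Then for $1\le\mathfrak p<2$ there is a constant $C$ depending only on $\mathfrak p$ and $n$ such that $\|b\|^2_{D_{\mathfrak p}}\le C\,\epsilon(b)^{1-\mathfrak p}$.
   Context: For $\alpha\in\mathbb{R}$, the one-variable Dirichlet-type space $D_\alpha$ consists of holomorphic $f(z)=\sum_{k\ge0}a_kz^k$ on $\mathbb{D}$ with $\|f\|^2_{D_\alpha}=\sum_{k\ge0}(k+1)^\alpha|a_k|^2<\infty$. *)

theory Defs
  imports "HOL-Analysis.Analysis"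
begin

definition blaschke_factor :: "complex \<Rightarrow> complex \<Rightarrow> complex" where
  "blaschke_factor a z = (z - a) / (1 - cnj a * z)"

definition blaschke_prod :: "nat \<Rightarrow> (nat \<Rightarrow> complex) \<Rightarrow> complex \<Rightarrow> complex" where
  "blaschke_prod n \<alpha> z = (\<Prod>j<n. blaschke_factor (\<alpha> j) z)"

definition blaschke_eps :: "nat \<Rightarrow> (nat \<Rightarrow> complex) \<Rightarrow> real" where
  "blaschke_eps n \<alpha> = Min ((\<lambda>j. 1 - norm (\<alpha> j)) ` {..<n})"

definition taylor_coeff :: "(complex \<Rightarrow> complex) \<Rightarrow> nat \<Rightarrow> complex" where
  "taylor_coeff f k = (deriv ^^ k) f 0 / of_nat (fact k)"

definition in_dirichlet :: "real \<Rightarrow> (complex \<Rightarrow> complex) \<Rightarrow> bool" where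
  "in_dirichlet \<alpha> f \<longleftrightarrow> summable (\<lambda>k. (real k + 1) powr \<alpha> * (norm (taylor_coeff f k))^2)"

definition dirichlet_norm_sq :: "real \<Rightarrow> (complex \<Rightarrow> complex) \<Rightarrow> real" where
  "dirichlet_norm_sq \<alpha> f = (\<Sum>k. (real k + 1) powr \<alpha> * (norm (taylor_coeff f k))^2)"

end

theory Submission
  imports Defs "HOL-Complex_Analysis.Complex_Analysis"
begin

definition ee :: "real \<Rightarrow> complex" where "ee t = exp (2 * of_real pi * \<i> * of_real t)"

lemma norm_ee[simp]: "norm (ee t) = 1"
  unfolding ee_def by (simp add: norm_exp_eq_Re)

lemma cont_ee[continuous_intros]: "continuous_on A ee"
  unfolding ee_def by (intro continuous_intros)

lemma exp_int_integral:
  fixes d :: int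
  shows "((\<lambda>t. exp (2 * of_real pi * \<i> * of_int d * of_real t)) has_integral (if d = 0 then 1 else 0)) {0..1::real}"
proof (cases "d = 0")
  case True
  then show ?thesis using has_integral_const_real[of "1::complex" 0 1] by simp
next
  case False
  define c where "c = 2 * of_real pi * \<i> * (of_int d :: complex)"
  have c0: "c \<noteq> 0" using False by (simp add: c_def)
  have "((\<lambda>t. exp (c * of_real t)) has_integral (exp (c * of_real 1) / c - exp (c * of_real 0) / c)) {0..1::real}"
  proof (rule fundamental_theorem_of_calculus)
    fix x :: real assume "x \<in> {0..1}"
    have "((\<lambda>t. exp (c * of_real t) / c) has_vector_derivative (exp (c * of_real x) * (c * 1)) / c) (at x)"
      by (auto intro!: derivative_eq_intros has_vector_derivative_real_field simp: field_simps)
    then show "((\<lambda>t. exp (c * of_real t) / c) has_vector_derivative exp (c * of_real x)) (at x within {0..1})"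
      using c0 by (auto intro: has_vector_derivative_at_within)
  qed simp
  moreover have "exp c = 1"
    using exp_integer_2pi[of "of_int d"] unfolding c_def by (simp add: mult_ac)
  ultimately show ?thesis using False by (simp add: c_def)
qed

lemma orth:
  "integral {0..1} (\<lambda>t. ee t ^ k * cnj (ee t) ^ m) = (if k = m then 1 else 0)"
proof -
  have "ee t ^ k * cnj (ee t) ^ m = exp (2 * of_real pi * \<i> * of_int (int k - int m) * of_real t)" for t
  proof -
    have "ee t ^ k = exp (of_nat k * (2 * of_real pi * \<i> * of_real t))"
      unfolding ee_def by (simp add: exp_of_nat_mult)
    moreover have "cnj (ee t) = exp (- (2 * of_real pi * \<i> * of_real t))"
      unfolding ee_def by (simp add: exp_cnj)
    then have "cnj (ee t) ^ m = exp (of_nat m * (- (2 * of_real pi * \<i> * of_real t)))"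
      by (simp only: exp_of_nat_mult)
    ultimately show ?thesis by (simp add: exp_add[symmetric] algebra_simps)
  qed
  then show ?thesis using exp_int_integral[of "int k - int m"] by (simp add: integral_unique)
qed

lemma series_integral:
  fixes a :: "nat \<Rightarrow> complex" and f :: "complex \<Rightarrow> complex" and H :: "real \<Rightarrow> complex"
  assumes R: "1 < R" and S: "\<And>z. norm z < R \<Longrightarrow> (\<lambda>k. a k * z^k) sums f z"
    and H: "continuous_on {0..1} H"
  shows "(\<lambda>k. a k * integral {0..1} (\<lambda>t. H t * ee t ^ k)) sums integral {0..1} (\<lambda>t. H t * f (ee t))"
proof -
  define \<rho> where "\<rho> = (1 + R) / 2"
  have "\<rho> < R" "1 < \<rho>" using R by (auto simp: \<rho>_def)
  then have "norm (of_real \<rho> :: complex) < R" "1 < \<rho>" by auto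
  then have "summable (\<lambda>k. a k * (of_real \<rho>)^k)" using S sums_summable by blast
  from powser_insidea[OF this, of 1] \<open>1 < \<rho>\<close>
  have sa: "summable (\<lambda>k. norm (a k))" by simp
  obtain B where B: "\<forall>t \<in> {0..1}. norm (H t) \<le> B"
    using compact_imp_bounded[OF compact_continuous_image[OF H compact_Icc]]
    by (auto simp: bounded_iff)
  define g where "g k t = H t * (a k * ee t ^ k)" for k t
  have gb: "norm (g k t) \<le> B * norm (a k)" if "t \<in> {0..1}" for k t
    unfolding g_def norm_mult norm_power norm_ee
    using B that by (simp add: mult_right_mono)
  have u: "uniform_limit {0..1} (\<lambda>n t. \<Sum>i<n. g i t) (\<lambda>t. \<Sum>i. g i t) sequentially"
    by (rule Weierstrass_m_test[OF gb]) (use sa in \<open>auto intro: summable_mult\<close>)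
  have gs: "(\<Sum>i. g i t) = H t * f (ee t)" for t
  proof -
    have "(\<lambda>k. a k * ee t ^ k) sums f (ee t)" using S R by simp
    then have "(\<lambda>k. H t * (a k * ee t ^ k)) sums (H t * f (ee t))" by (rule sums_mult)
    then show ?thesis unfolding g_def by (simp add: sums_iff)
  qed
  have c: "continuous_on {0..1} (\<lambda>t. \<Sum>i<n. g i t)" for n
    unfolding g_def by (intro continuous_intros H)
  obtain I J where I: "\<And>n. ((\<lambda>t. \<Sum>i<n. g i t) has_integral I n) {0..1}"
    and J: "((\<lambda>t. \<Sum>i. g i t) has_integral J) {0..1}" and lim: "I \<longlonglongrightarrow> J"
    using uniform_limit_integral[OF u c] by auto
  have Jeq: "J = integral {0..1} (\<lambda>t. H t * f (ee t))"
    using J gs by (simp add: integral_unique)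
  have intg: "(\<lambda>t. H t * ee t ^ k) integrable_on {0..1}" for k
    by (intro integrable_continuous_real continuous_intros H)
  have Ieq: "I n = (\<Sum>k<n. a k * integral {0..1} (\<lambda>t. H t * ee t ^ k))" for n
  proof -
    have "((\<lambda>t. \<Sum>i<n. g i t) has_integral (\<Sum>k<n. a k * integral {0..1} (\<lambda>t. H t * ee t ^ k))) {0..1}"
    proof (rule has_integral_sum[OF finite_lessThan])
      fix k assume "k \<in> {..<n}"
      have "((\<lambda>t. a k * (H t * ee t ^ k)) has_integral a k * integral {0..1} (\<lambda>t. H t * ee t ^ k)) {0..1}"
        by (rule has_integral_mult_right) (use intg in \<open>simp add: integrable_integral\<close>)
      then show "(g k has_integral a k * integral {0..1} (\<lambda>t. H t * ee t ^ k)) {0..1}"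
        unfolding g_def by (simp add: mult_ac)
    qed
    then show ?thesis using I[of n] has_integral_unique by blast
  qed
  show ?thesis using lim unfolding sums_def Ieq Jeq .
qed

lemma coeff_integral:
  fixes a :: "nat \<Rightarrow> complex" and f :: "complex \<Rightarrow> complex"
  assumes R: "1 < R" and S: "\<And>z. norm z < R \<Longrightarrow> (\<lambda>k. a k * z^k) sums f z"
  shows "integral {0..1} (\<lambda>t. f (ee t) * cnj (ee t) ^ m) = a m"
proof -
  have "(\<lambda>k. a k * integral {0..1} (\<lambda>t. cnj (ee t) ^ m * ee t ^ k)) sums integral {0..1} (\<lambda>t. cnj (ee t) ^ m * f (ee t))"
    by (rule series_integral[OF R]) (auto intro: S intro!: continuous_intros)
  moreover have "integral {0..1} (\<lambda>t. cnj (ee t) ^ m * ee t ^ k) = (if k = m then 1 else 0)" for k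
    using orth[of k m] by (simp add: mult_ac)
  ultimately have "(\<lambda>k. a k * (if k = m then 1 else 0)) sums integral {0..1} (\<lambda>t. f (ee t) * cnj (ee t) ^ m)"
    by (simp add: mult_ac)
  moreover have "(\<lambda>k. a k * (if k = m then 1 else 0)) sums a m"
    using sums_single[of m "\<lambda>k. a k"] by (simp add: if_distrib cong: if_cong)
  ultimately show ?thesis using sums_unique2 by blast
qed

lemma parseval_shift:
  fixes a c :: "nat \<Rightarrow> complex" and f g :: "complex \<Rightarrow> complex"
  assumes R: "1 < R" and S: "\<And>z. norm z < R \<Longrightarrow> (\<lambda>k. a k * z^k) sums f z"
    and T: "\<And>z. norm z < R \<Longrightarrow> (\<lambda>k. c k * z^k) sums g z"
    and gc: "continuous_on (sphere 0 1) g"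
  shows "(\<lambda>k. a k * cnj (c (k + s))) sums integral {0..1} (\<lambda>t. cnj (g (ee t)) * ee t ^ s * f (ee t))"
proof -
  have Hc: "continuous_on {0..1} (\<lambda>t. cnj (g (ee t)) * ee t ^ s)"
    by (intro continuous_intros continuous_on_compose2[OF gc]) auto
  have "integral {0..1} (\<lambda>t. cnj (g (ee t)) * ee t ^ s * ee t ^ k) = cnj (c (k + s))" for k
  proof -
    have "integral {0..1} (\<lambda>t. cnj (g (ee t)) * ee t ^ s * ee t ^ k)
        = cnj (integral {0..1} (\<lambda>t. g (ee t) * cnj (ee t) ^ (k + s)))"
      by (simp add: integral_cnj power_add mult_ac)
    also have "\<dots> = cnj (c (k + s))" using coeff_integral[OF R T] by simp
    finally show ?thesis .
  qed
  with series_integral[OF R S Hc] show ?thesis by simp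
qed

definition PP :: "complex \<Rightarrow> complex \<Rightarrow> real" where
  "PP a z = (1 - norm a ^ 2) / norm (1 - cnj a * z) ^ 2"

lemma bf_norm:
  assumes "norm z = 1"
  shows "norm (blaschke_factor a z) = 1 \<or> 1 - cnj a * z = 0"
proof -
  have zz: "z * cnj z = 1" using complex_norm_square[of z] assms by simp
  have "z * cnj (z - a) = z * cnj z - cnj a * z" by (simp add: algebra_simps)
  then have "1 - cnj a * z = z * cnj (z - a)" using zz by simp
  then have "norm (1 - cnj a * z) = norm z * norm (cnj (z - a))" by (metis norm_mult)
  then have "norm (1 - cnj a * z) = norm (z - a)" using assms by (simp only: complex_mod_cnj)
  then show ?thesis unfolding blaschke_factor_def by (auto simp: norm_divide)
qed

lemma den_nz:
  assumes "norm (cnj a * z) < 1" shows "1 - cnj a * z \<noteq> 0"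
  using assms by auto

lemma bp_norm:
  assumes "norm z = 1" "\<forall>j<m. norm (\<alpha> j) < 1"
  shows "norm (blaschke_prod m \<alpha> z) = 1"
proof -
  have "norm (blaschke_factor (\<alpha> j) z) = 1" if "j < m" for j
  proof -
    have "norm (cnj (\<alpha> j) * z) < 1" using assms that by (simp add: norm_mult)
    then show ?thesis using bf_norm[OF assms(1), of "\<alpha> j"] by auto
  qed
  then show ?thesis unfolding blaschke_prod_def prod_norm[symmetric] by simp
qed

lemma bf_deriv:
  assumes "1 - cnj a * z \<noteq> 0"
  shows "(blaschke_factor a has_field_derivative (1 - cnj a * a) / (1 - cnj a * z)^2) (at z)"
proof -
  have "((\<lambda>z. (z - a) / (1 - cnj a * z)) has_field_derivative
     ((1 - cnj a * z + (z - a) * cnj a) / (1 - cnj a * z)\<^sup>2)) (at z)"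
    using assms by (auto intro!: derivative_eq_intros simp: power2_eq_square)
  moreover have "1 - cnj a * z + (z - a) * cnj a = 1 - cnj a * a"
    by (simp add: algebra_simps)
  ultimately show ?thesis unfolding blaschke_factor_def[abs_def] by simp
qed

lemma norm_bf_deriv:
  assumes "norm a < 1"
  shows "norm ((1 - cnj a * a) / (1 - cnj a * z)^2) = PP a z"
proof -
  have "cnj a * a = of_real (norm a ^ 2)"
    by (metis complex_norm_square mult.commute)
  then have "1 - cnj a * a = of_real (1 - norm a ^ 2)" by simp
  moreover have "norm a ^ 2 \<le> 1" using assms by (simp add: power_le_one)
  ultimately have e: "norm (1 - cnj a * a) = 1 - norm a ^ 2"
    by (simp only: norm_of_real)
  show ?thesis unfolding PP_def norm_divide norm_power e ..
qed

lemma bp_deriv: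
  assumes "\<forall>j<m. 1 - cnj (\<alpha> j) * z \<noteq> 0"
  shows "\<exists>D. (blaschke_prod m \<alpha> has_field_derivative D) (at z) \<and>
     (norm z = 1 \<longrightarrow> (\<forall>j<m. norm (\<alpha> j) < 1) \<longrightarrow> norm D \<le> (\<Sum>j<m. PP (\<alpha> j) z))"
  using assms
proof (induction m)
  case 0
  have "blaschke_prod 0 \<alpha> = (\<lambda>z. 1)" by (auto simp: blaschke_prod_def)
  then show ?case by (intro exI[of _ 0]) auto
next
  case (Suc m)
  then obtain D where D: "(blaschke_prod m \<alpha> has_field_derivative D) (at z)"
    and Db: "norm z = 1 \<longrightarrow> (\<forall>j<m. norm (\<alpha> j) < 1) \<longrightarrow> norm D \<le> (\<Sum>j<m. PP (\<alpha> j) z)"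
    by auto
  define Df where "Df = (1 - cnj (\<alpha> m) * \<alpha> m) / (1 - cnj (\<alpha> m) * z)^2"
  have F: "(blaschke_factor (\<alpha> m) has_field_derivative Df) (at z)"
    unfolding Df_def by (rule bf_deriv) (use Suc.prems in auto)
  have eq: "blaschke_prod (Suc m) \<alpha> = (\<lambda>w. blaschke_prod m \<alpha> w * blaschke_factor (\<alpha> m) w)"
    by (auto simp: blaschke_prod_def)
  have dd: "(blaschke_prod (Suc m) \<alpha> has_field_derivative
      (D * blaschke_factor (\<alpha> m) z + Df * blaschke_prod m \<alpha> z)) (at z)"
    unfolding eq by (rule DERIV_mult[OF D F])
  show ?case
  proof (intro exI conjI impI, fact dd)
    assume z: "norm z = 1" and al: "\<forall>j<Suc m. norm (\<alpha> j) < 1"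
    have n1: "norm (blaschke_prod m \<alpha> z) = 1" using bp_norm[OF z] al by auto
    have n2: "norm (blaschke_factor (\<alpha> m) z) = 1"
      using bp_norm[OF z, of "Suc m" \<alpha>] al n1 eq by (simp add: norm_mult)
    have "norm (D * blaschke_factor (\<alpha> m) z + Df * blaschke_prod m \<alpha> z) \<le> norm Df + norm D"
      using norm_triangle_ineq[of "D * blaschke_factor (\<alpha> m) z" "Df * blaschke_prod m \<alpha> z"]
      by (simp add: norm_mult n1 n2)
    also have "norm Df = PP (\<alpha> m) z" unfolding Df_def by (rule norm_bf_deriv) (use al in auto)
    also have "norm D \<le> (\<Sum>j<m. PP (\<alpha> j) z)" using Db z al by auto
    finally show "norm (D * blaschke_factor (\<alpha> m) z + Df * blaschke_prod m \<alpha> z) \<le> (\<Sum>j<Suc m. PP (\<alpha> j) z)"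
      by simp
  qed
qed

lemma cnjw: "cnj w * w = complex_of_real (norm w ^ 2)"
  by (metis complex_norm_square mult.commute)

lemma PP_ee_cont:
  assumes "norm a < 1"
  shows "continuous_on {0..1} (\<lambda>t. PP a (ee t))"
proof -
  have "1 - cnj a * ee t \<noteq> 0" for t
    using assms by (intro den_nz) (simp add: norm_mult)
  then show ?thesis unfolding PP_def by (intro continuous_intros) auto
qed

lemma poisson:
  assumes a: "norm a < 1"
  shows "((\<lambda>t. PP a (ee t)) has_integral 1) {0..1}"
proof -
  define R where "R = 2 / (1 + norm a)"
  have a2: "norm a ^ 2 < 1" using a by (simp add: abs_square_less_1)
  have p: "1 + norm a > 0" using norm_ge_zero[of a] by linarith
  have R1: "1 < R" using a p by (simp add: R_def less_divide_eq)
  have aR: "norm a * R < 1" using a p by (simp add: R_def divide_less_eq)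
  define h where "h z = 1 / (1 - cnj a * z)" for z
  have small: "norm (cnj a * z) < 1" if "norm z < R" for z
  proof -
    have "norm (cnj a * z) = norm a * norm z" by (simp add: norm_mult)
    also have "\<dots> \<le> norm a * R" using that by (intro mult_left_mono) auto
    finally show ?thesis using aR by simp
  qed
  have S: "(\<lambda>k. cnj a ^ k * z ^ k) sums h z" if "norm z < R" for z
    using geometric_sums[OF small[OF that]] unfolding h_def by (simp add: power_mult_distrib)
  have hc: "continuous_on (sphere 0 1) h"
  proof -
    have "1 - cnj a * z \<noteq> 0" if "z \<in> sphere 0 1" for z
      using that a by (intro den_nz) (simp add: norm_mult)
    then show ?thesis unfolding h_def by (intro continuous_intros) auto
  qed
  from parseval_shift[OF R1 S S hc, of 0]
  have P: "(\<lambda>k. cnj a ^ k * cnj (cnj a ^ k)) sums integral {0..1} (\<lambda>t. cnj (h (ee t)) * h (ee t))"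
    by simp
  have eqk: "cnj a ^ k * cnj (cnj a ^ k) = of_real ((norm a ^ 2) ^ k)" for k
  proof -
    have "cnj a ^ k * cnj (cnj a ^ k) = (cnj a * a) ^ k" by (simp add: power_mult_distrib)
    also have "cnj a * a = of_real (norm a ^ 2)" by (metis complex_norm_square mult.commute)
    finally show ?thesis by simp
  qed
  moreover have "(\<lambda>k. (norm a ^ 2) ^ k) sums (1 / (1 - norm a ^ 2))"
    by (rule geometric_sums) (use a2 in simp)
  then have "(\<lambda>k. of_real ((norm a ^ 2) ^ k) :: complex) sums of_real (1 / (1 - norm a ^ 2))"
    by (rule sums_of_real)
  then have "(\<lambda>k. cnj a ^ k * cnj (cnj a ^ k)) sums of_real (1 / (1 - norm a ^ 2))"
    by (simp only: eqk)
  with P have I1: "integral {0..1} (\<lambda>t. cnj (h (ee t)) * h (ee t)) = of_real (1 / (1 - norm a ^ 2))"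
    using sums_unique2 by blast
  define F where "F t = norm (h (ee t)) ^ 2" for t
  have Fc: "continuous_on {0..1} F"
    unfolding F_def by (intro continuous_intros continuous_on_compose2[OF hc]) auto
  then have "(F has_integral integral {0..1} F) {0..1}"
    using integrable_continuous_real integrable_integral by blast
  then have Fi: "(F has_integral integral {0..1} F) {0..1}" .
  then have "((\<lambda>t. complex_of_real (F t)) has_integral of_real (integral {0..1} F)) {0..1}"
    by (rule has_integral_of_real)
  moreover have eqF: "(\<lambda>t. cnj (h (ee t)) * h (ee t)) = (\<lambda>t. complex_of_real (F t))"
    unfolding F_def cnjw ..
  ultimately have "((\<lambda>t. cnj (h (ee t)) * h (ee t)) has_integral of_real (integral {0..1} F)) {0..1}"
    by (simp only:)
  then have "integral {0..1} (\<lambda>t. cnj (h (ee t)) * h (ee t)) = of_real (integral {0..1} F)"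
    by (rule integral_unique)
  with I1 have IF: "integral {0..1} F = 1 / (1 - norm a ^ 2)"
    by (simp only: of_real_eq_iff)
  have "((\<lambda>t. (1 - norm a ^ 2) * F t) has_integral ((1 - norm a ^ 2) * integral {0..1} F)) {0..1}"
    by (rule has_integral_mult_right[OF Fi])
  moreover have "(1 - norm a ^ 2) * integral {0..1} F = 1"
    unfolding IF using a2 by simp
  moreover have "(\<lambda>t. (1 - norm a ^ 2) * F t) = (\<lambda>t. PP a (ee t))"
    unfolding F_def PP_def h_def by (simp add: norm_divide power_divide)
  ultimately show ?thesis by (simp only:)
qed

lemma PP_bound:
  assumes "norm z = 1" "0 < e" "e \<le> 1 - norm a"
  shows "PP a z \<le> 2 / e"
proof -
  have na: "norm a < 1" using assms by simp
  have a2: "norm a ^ 2 < 1" using na by (simp add: abs_square_less_1)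
  have "norm (1 - cnj a * z) \<ge> 1 - norm a"
    using norm_triangle_ineq2[of 1 "cnj a * z"] assms by (simp add: norm_mult)
  then have pos: "norm (1 - cnj a * z) > 0" using na by linarith
  from \<open>norm (1 - cnj a * z) \<ge> 1 - norm a\<close> have d: "norm (1 - cnj a * z) ^ 2 \<ge> (1 - norm a) ^ 2"
    using na by (intro power_mono) auto
  have "PP a z \<le> (1 - norm a ^ 2) / (1 - norm a) ^ 2"
    unfolding PP_def using na d
    by (intro divide_left_mono) (use a2 pos na in auto)
  also have "\<dots> = (1 + norm a) * (1 - norm a) / ((1 - norm a) * (1 - norm a))"
    by (simp add: power2_eq_square algebra_simps)
  also have "\<dots> = (1 + norm a) / (1 - norm a)"
    using na by simp
  also have "\<dots> \<le> 2 / (1 - norm a)"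
    using na by (intro divide_right_mono) auto
  also have "\<dots> \<le> 2 / e" using assms by (intro divide_left_mono) auto
  finally show ?thesis .
qed

lemma key_ineq:
  fixes e p x :: real
  assumes e: "0 < e" and p: "1 \<le> p" "p \<le> 2" and x: "0 < x"
  shows "x powr p \<le> e powr (1 - p) * x + e powr (2 - p) * x^2"
proof (cases "x * e \<le> 1")
  case True
  then have "x \<le> 1 / e" using e by (simp add: field_simps)
  then have "x powr (p - 1) \<le> (1 / e) powr (p - 1)"
    using p x by (intro powr_mono2) auto
  also have "(1 / e) powr (p - 1) = e powr (1 - p)"
  proof -
    have "e powr (1 - p) = e powr (- (p - 1))" by simp
    also have "\<dots> = 1 / e powr (p - 1)" by (simp only: powr_minus divide_inverse)
    finally show ?thesis using e by (simp add: powr_divide)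
  qed
  finally have A: "x powr (p - 1) \<le> e powr (1 - p)" .
  have "x powr p = x powr (1 + (p - 1))" by simp
  also have "\<dots> = x powr 1 * x powr (p - 1)" by (rule powr_add)
  also have "\<dots> = x * x powr (p - 1)" using x by simp
  finally have "x powr p = x * x powr (p - 1)" .
  also have "\<dots> \<le> x * e powr (1 - p)" using A x by (intro mult_left_mono) auto
  finally show ?thesis using e by (simp add: mult.commute add_increasing2)
next
  case False
  then have "1 / e \<le> x" using e by (simp add: field_simps)
  then have "x powr (p - 2) \<le> (1 / e) powr (p - 2)"
    using p x e by (intro powr_mono2') auto
  also have "(1 / e) powr (p - 2) = e powr (2 - p)"
  proof -
    have "e powr (2 - p) = e powr (- (p - 2))" by simp
    also have "\<dots> = 1 / e powr (p - 2)" by (simp only: powr_minus divide_inverse)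
    finally show ?thesis using e by (simp add: powr_divide)
  qed
  finally have A: "x powr (p - 2) \<le> e powr (2 - p)" .
  have "x powr p = x powr (2 + (p - 2))" by simp
  also have "\<dots> = x powr 2 * x powr (p - 2)" by (rule powr_add)
  also have "\<dots> = x^2 * x powr (p - 2)" using x by (simp add: powr_numeral)
  finally have "x powr p = x^2 * x powr (p - 2)" .
  also have "\<dots> \<le> x^2 * e powr (2 - p)" using A x by (intro mult_left_mono) auto
  finally show ?thesis using e x by (simp add: mult.commute add_increasing)
qed

lemma PP_nonneg: "norm a < 1 \<Longrightarrow> 0 \<le> PP a z"
  unfolding PP_def by (intro divide_nonneg_nonneg) (auto simp: abs_square_le_1 less_imp_le)

theorem lemma9p3:
  fixes p :: real and n :: nat
  assumes "1 \<le> p" and "p < 2" and "n \<ge> 1"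
  shows "\<exists>C. \<forall>\<alpha> :: nat \<Rightarrow> complex. (\<forall>j<n. norm (\<alpha> j) < 1) \<longrightarrow>
           in_dirichlet p (blaschke_prod n \<alpha>) \<and>
           dirichlet_norm_sq p (blaschke_prod n \<alpha>) \<le> C * blaschke_eps n \<alpha> powr (1 - p)"
proof (intro exI allI impI)
  fix \<alpha> :: "nat \<Rightarrow> complex"
  assume al: "\<forall>j<n. norm (\<alpha> j) < 1"
  define e where "e = blaschke_eps n \<alpha>"
  have fin: "finite ((\<lambda>j. 1 - norm (\<alpha> j)) ` {..<n})" by simp
  have "0 \<in> {..<n}" using assms(3) by simp
  then have ne: "(\<lambda>j. 1 - norm (\<alpha> j)) ` {..<n} \<noteq> {}" by blast
  have e_le: "e \<le> 1 - norm (\<alpha> j)" if "j < n" for j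
    unfolding e_def blaschke_eps_def using that by (intro Min_le fin) auto
  have e_pos: "0 < e"
    unfolding e_def blaschke_eps_def using fin ne al by (subst Min_gr_iff) auto
  have "e \<le> 1 - norm (\<alpha> 0)" using e_le assms(3) by simp
  then have e1: "e \<le> 1" using norm_ge_zero[of "\<alpha> 0"] by linarith
  define R where "R = 2 / (2 - e)"
  have R1: "1 < R" using e_pos e1 by (simp add: R_def less_divide_eq)
  have small: "norm (cnj (\<alpha> j) * z) < 1" if "norm z < R" "j < n" for z j
  proof -
    have "norm (cnj (\<alpha> j) * z) = norm (\<alpha> j) * norm z" by (simp add: norm_mult)
    also have "\<dots> \<le> (1 - e) * norm z" using e_le[OF that(2)] by (intro mult_right_mono) auto
    also have "\<dots> \<le> (1 - e) * R" using that(1) e1 by (intro mult_left_mono) auto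
    also have "\<dots> < 1" using e_pos e1 by (simp add: R_def divide_less_eq)
    finally show ?thesis .
  qed
  define b where "b = blaschke_prod n \<alpha>"
  have bd: "\<exists>D. (b has_field_derivative D) (at z) \<and>
     (norm z = 1 \<longrightarrow> (\<forall>j<n. norm (\<alpha> j) < 1) \<longrightarrow> norm D \<le> (\<Sum>j<n. PP (\<alpha> j) z))"
    if "norm z < R" for z
    unfolding b_def by (rule bp_deriv) (use small[OF that] den_nz in blast)
  have hol: "b holomorphic_on ball 0 R"
  proof -
    have "\<forall>x\<in>ball 0 R. \<exists>f'. (b has_field_derivative f') (at x)"
    proof
      fix x :: complex assume "x \<in> ball 0 R"
      then have "norm x < R" by simp
      from bd[OF this] show "\<exists>f'. (b has_field_derivative f') (at x)" by blast
    qed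
    then show ?thesis by (subst holomorphic_on_open) auto
  qed
  have hold: "deriv b holomorphic_on ball 0 R"
    using hol by (rule holomorphic_deriv) simp
  define c where "c k = taylor_coeff b k" for k
  define d where "d k = taylor_coeff (deriv b) k" for k
  have Sb: "(\<lambda>k. c k * z^k) sums b z" if "norm z < R" for z
    using holomorphic_power_series[OF hol, of z] that by (simp add: c_def taylor_coeff_def)
  have Sd: "(\<lambda>k. d k * z^k) sums deriv b z" if "norm z < R" for z
    using holomorphic_power_series[OF hold, of z] that by (simp add: d_def taylor_coeff_def)
  have dc: "d k = of_nat (Suc k) * c (Suc k)" for k
  proof -
    have "(deriv ^^ Suc k) b = (deriv ^^ k) (deriv b)" by (simp only: funpow_Suc_right o_def)
    moreover have nz: "(fact k + fact k * of_nat k :: complex) \<noteq> 0"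
    proof -
      have "(fact k + fact k * of_nat k :: complex) = of_nat (fact k + fact k * k)" by simp
      moreover have "fact k + fact k * k \<noteq> (0::nat)" by simp
      ultimately show ?thesis by (metis of_nat_eq_0_iff)
    qed
    ultimately show ?thesis unfolding d_def c_def taylor_coeff_def by (simp add: field_simps)
  qed
  have sph: "sphere 0 1 \<subseteq> ball (0::complex) R" using R1 by auto
  have cb: "continuous_on (sphere 0 1) b"
    using holomorphic_on_imp_continuous_on[OF hol] sph continuous_on_subset by blast
  have cdb: "continuous_on (sphere 0 1) (deriv b)"
    using holomorphic_on_imp_continuous_on[OF hold] sph continuous_on_subset by blast
  have bnorm: "norm (b (ee t)) = 1" for t
    unfolding b_def using bp_norm[of "ee t" n \<alpha>] al by simp
  have dbb: "norm (deriv b (ee t)) \<le> (\<Sum>j<n. PP (\<alpha> j) (ee t))" for t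
  proof -
    obtain D where D: "(b has_field_derivative D) (at (ee t))"
      and Db: "norm D \<le> (\<Sum>j<n. PP (\<alpha> j) (ee t))"
      using bd[of "ee t"] R1 al by auto
    then show ?thesis using DERIV_imp_deriv[OF D] by simp
  qed
  define S where "S t = (\<Sum>j<n. PP (\<alpha> j) (ee t))" for t
  have S_nonneg: "0 \<le> S t" for t
    unfolding S_def using al by (intro sum_nonneg PP_nonneg) auto
  have S_int: "(S has_integral real n) {0..1}"
  proof -
    have "(S has_integral (\<Sum>j<n. 1)) {0..1}"
      unfolding S_def by (intro has_integral_sum) (use al poisson in auto)
    then show ?thesis by simp
  qed
  have S_bound: "S t \<le> real n * (2 / e)" for t
  proof -
    have "S t \<le> of_nat (card {..<n}) * (2 / e)"
      unfolding S_def by (intro sum_bounded_above PP_bound) (use e_pos e_le in auto)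
    then show ?thesis by simp
  qed
  have cS: "continuous_on {0..1} S"
    unfolding S_def by (intro continuous_on_sum PP_ee_cont) (use al in auto)
  have cdbe: "continuous_on {0..1} (\<lambda>t. deriv b (ee t))"
    by (intro continuous_on_compose2[OF cdb cont_ee]) auto
  have cbe: "continuous_on {0..1} (\<lambda>t. b (ee t))"
    by (intro continuous_on_compose2[OF cb cont_ee]) auto
  define q where "q k = norm (c k) ^ 2" for k
  have q_nonneg: "0 \<le> q k" for k by (simp add: q_def)
  have q_sums: "q sums 1"
  proof -
    have P: "(\<lambda>k. c k * cnj (c (k + 0))) sums integral {0..1} (\<lambda>t. cnj (b (ee t)) * ee t ^ 0 * b (ee t))"
      by (rule parseval_shift[OF R1 Sb Sb cb])
    have "(\<lambda>t. cnj (b (ee t)) * ee t ^ 0 * b (ee t)) = (\<lambda>t. 1)"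
      using bnorm by (simp add: cnjw)
    then have "(\<lambda>k. c k * cnj (c k)) sums 1" using P by simp
    moreover have "c k * cnj (c k) = of_real (q k)" for k
      unfolding q_def by (metis cnjw mult.commute)
    ultimately have "(\<lambda>k. complex_of_real (q k)) sums of_real 1" by simp
    then show ?thesis by (simp only: sums_of_real_iff)
  qed
  define s1 where "s1 k = real (Suc k) * q (Suc k)" for k
  have s1: "summable s1 \<and> suminf s1 \<le> real n"
  proof -
    define I2 where "I2 = integral {0..1} (\<lambda>t. cnj (b (ee t)) * ee t ^ 1 * deriv b (ee t))"
    have P: "(\<lambda>k. d k * cnj (c (k + 1))) sums I2"
      unfolding I2_def by (rule parseval_shift[OF R1 Sd Sb cb])
    have "d k * cnj (c (k + 1)) = of_real (s1 k)" for k
    proof -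
      have cc: "c (Suc k) * cnj (c (Suc k)) = of_real (q (Suc k))" unfolding q_def by (metis cnjw mult.commute)
      have "d k * cnj (c (k + 1)) = of_nat (Suc k) * (c (Suc k) * cnj (c (Suc k)))"
        unfolding dc by (simp add: mult.assoc)
      also have "\<dots> = of_real (s1 k)" unfolding cc s1_def by simp
      finally show ?thesis .
    qed
    then have P': "(\<lambda>k. complex_of_real (s1 k)) sums I2" using P by simp
    then have sm: "summable s1" using summable_of_real_iff sums_summable by blast
    then have "(\<lambda>k. complex_of_real (s1 k)) sums of_real (suminf s1)"
      by (intro sums_of_real summable_sums)
    then have eq: "of_real (suminf s1) = I2" using P' sums_unique2 by blast
    have "norm I2 \<le> integral {0..1} S"
      unfolding I2_def
    proof (rule integral_norm_bound_integral)
      show "(\<lambda>t. cnj (b (ee t)) * ee t ^ 1 * deriv b (ee t)) integrable_on {0..1}"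
        by (intro integrable_continuous_real continuous_intros cbe cdbe)
      show "S integrable_on {0..1}" using S_int by blast
      fix t :: real assume "t \<in> {0..1}"
      show "norm (cnj (b (ee t)) * ee t ^ 1 * deriv b (ee t)) \<le> S t"
        using dbb[of t] bnorm[of t] by (simp add: norm_mult S_def)
    qed
    also have "integral {0..1} S = real n" using S_int by (rule integral_unique)
    finally have "norm I2 \<le> real n" .
    then have "suminf s1 \<le> real n" using eq[symmetric] by simp
    with sm show ?thesis by simp
  qed
  define s2 where "s2 k = real (Suc k) ^ 2 * q (Suc k)" for k
  have s2: "summable s2 \<and> suminf s2 \<le> 2 * real n ^ 2 / e"
  proof -
    define I3 where "I3 = integral {0..1} (\<lambda>t. cnj (deriv b (ee t)) * ee t ^ 0 * deriv b (ee t))"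
    have P: "(\<lambda>k. d k * cnj (d (k + 0))) sums I3"
      unfolding I3_def by (rule parseval_shift[OF R1 Sd Sd cdb])
    have "d k * cnj (d k) = of_real (s2 k)" for k
    proof -
      have "d k * cnj (d k) = of_real (norm (d k) ^ 2)" by (metis cnjw mult.commute)
      also have "norm (d k) ^ 2 = s2 k" unfolding dc s2_def q_def by (simp add: norm_mult power_mult_distrib del: of_nat_Suc)
      finally show ?thesis .
    qed
    then have P': "(\<lambda>k. complex_of_real (s2 k)) sums I3" using P by simp
    then have sm: "summable s2" using summable_of_real_iff sums_summable by blast
    then have "(\<lambda>k. complex_of_real (s2 k)) sums of_real (suminf s2)"
      by (intro sums_of_real summable_sums)
    then have eq: "of_real (suminf s2) = I3" using P' sums_unique2 by blast
    have Si2: "((\<lambda>t. real n * (2 / e) * S t) has_integral (real n * (2 / e) * real n)) {0..1}"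
      by (rule has_integral_mult_right[OF S_int])
    have "norm I3 \<le> integral {0..1} (\<lambda>t. real n * (2 / e) * S t)"
      unfolding I3_def
    proof (rule integral_norm_bound_integral)
      show "(\<lambda>t. cnj (deriv b (ee t)) * ee t ^ 0 * deriv b (ee t)) integrable_on {0..1}"
        by (intro integrable_continuous_real continuous_intros cdbe)
      show "(\<lambda>t. real n * (2 / e) * S t) integrable_on {0..1}" using Si2 by blast
      fix t :: real assume "t \<in> {0..1}"
      have "norm (cnj (deriv b (ee t)) * ee t ^ 0 * deriv b (ee t)) = norm (deriv b (ee t)) * norm (deriv b (ee t))"
        by (simp add: norm_mult)
      also have "\<dots> \<le> S t * (real n * (2 / e))"
        using dbb[of t] S_bound[of t] S_nonneg[of t] unfolding S_def[symmetric]
        by (intro mult_mono) auto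
      finally show "norm (cnj (deriv b (ee t)) * ee t ^ 0 * deriv b (ee t)) \<le> real n * (2 / e) * S t"
        by (simp add: mult.commute)
    qed
    also have "\<dots> = real n * (2 / e) * real n" using Si2 by (rule integral_unique)
    finally have "norm I3 \<le> real n * (2 / e) * real n" .
    then have "\<bar>suminf s2\<bar> \<le> real n * (2 / e) * real n" using eq[symmetric] by simp
    moreover have "real n * (2 / e) * real n = 2 * real n ^ 2 / e" by (simp add: power2_eq_square)
    ultimately have "suminf s2 \<le> 2 * real n ^ 2 / e" by linarith
    with sm show ?thesis by simp
  qed
  define u where "u k = real k * q k" for k
  define v where "v k = real k ^ 2 * q k" for k
  have su: "summable u" and u_le: "suminf u \<le> real n"
  proof -
    have "(\<lambda>k. u (Suc k)) = s1" by (auto simp: u_def s1_def)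
    then have "summable (\<lambda>k. u (Suc k))" using s1 by simp
    then show "summable u" by (simp add: summable_Suc_iff)
    then have "suminf u = suminf s1" using suminf_split_head[of u] \<open>(\<lambda>k. u (Suc k)) = s1\<close>
      by (simp add: u_def)
    then show "suminf u \<le> real n" using s1 by simp
  qed
  have sv: "summable v" and v_le: "suminf v \<le> 2 * real n ^ 2 / e"
  proof -
    have "(\<lambda>k. v (Suc k)) = s2" by (auto simp: v_def s2_def)
    then have "summable (\<lambda>k. v (Suc k))" using s2 by simp
    then show "summable v" by (simp add: summable_Suc_iff)
    then have "suminf v = suminf s2" using suminf_split_head[of v] \<open>(\<lambda>k. v (Suc k)) = s2\<close>
      by (simp add: v_def)
    then show "suminf v \<le> 2 * real n ^ 2 / e" using s2 by simp
  qed
  have sq: "summable q" using q_sums by (rule sums_summable)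
  have sumq: "suminf q = 1" using q_sums by (rule sums_unique[symmetric])
  define w where "w k = e powr (1 - p) * (q k + u k) + e powr (2 - p) * (2 * q k + 2 * v k)" for k
  have s_qu: "summable (\<lambda>k. q k + u k)" using sq su by (rule summable_add)
  have s_qv: "summable (\<lambda>k. 2 * q k + 2 * v k)"
    using summable_mult[OF sq, of 2] summable_mult[OF sv, of 2] by (rule summable_add)
  have s_A: "summable (\<lambda>k. e powr (1 - p) * (q k + u k))" using s_qu by (rule summable_mult)
  have s_B: "summable (\<lambda>k. e powr (2 - p) * (2 * q k + 2 * v k))" using s_qv by (rule summable_mult)
  have sw: "summable w" unfolding w_def using s_A s_B by (rule summable_add)
  have w_sum: "suminf w = e powr (1 - p) * (suminf q + suminf u) + e powr (2 - p) * (2 * suminf q + 2 * suminf v)"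
  proof -
    have "suminf w = (\<Sum>k. e powr (1 - p) * (q k + u k)) + (\<Sum>k. e powr (2 - p) * (2 * q k + 2 * v k))"
      unfolding w_def using suminf_add[OF s_A s_B] by simp
    also have "(\<Sum>k. e powr (1 - p) * (q k + u k)) = e powr (1 - p) * (\<Sum>k. q k + u k)"
      using s_qu by (rule suminf_mult)
    also have "(\<Sum>k. q k + u k) = suminf q + suminf u" using suminf_add[OF sq su] by simp
    also have "(\<Sum>k. e powr (2 - p) * (2 * q k + 2 * v k)) = e powr (2 - p) * (\<Sum>k. 2 * q k + 2 * v k)"
      using s_qv by (rule suminf_mult)
    also have "(\<Sum>k. 2 * q k + 2 * v k) = (\<Sum>k. 2 * q k) + (\<Sum>k. 2 * v k)"
      using suminf_add[OF summable_mult[OF sq, of 2] summable_mult[OF sv, of 2]] by simp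
    also have "(\<Sum>k. 2 * q k) = 2 * suminf q" using sq by (rule suminf_mult)
    also have "(\<Sum>k. 2 * v k) = 2 * suminf v" using sv by (rule suminf_mult)
    finally show ?thesis .
  qed
  define T where "T k = (real k + 1) powr p * (norm (taylor_coeff (blaschke_prod n \<alpha>) k))^2" for k
  have Tq: "T k = (real k + 1) powr p * q k" for k
    unfolding T_def q_def c_def b_def ..
  have T_le: "T k \<le> w k" for k
  proof -
    have "(real k + 1) powr p \<le> e powr (1 - p) * (real k + 1) + e powr (2 - p) * (real k + 1)^2"
      using key_ineq[OF e_pos assms(1) _, of "real k + 1"] assms(2) by simp
    also have "\<dots> \<le> e powr (1 - p) * (1 + real k) + e powr (2 - p) * (2 + 2 * real k ^ 2)"
    proof -
      have "0 \<le> (real k - 1)^2" by simp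
      then have "(real k + 1)^2 \<le> 2 + 2 * real k ^ 2"
        by (simp add: power2_eq_square algebra_simps)
      then have "e powr (2 - p) * (real k + 1)^2 \<le> e powr (2 - p) * (2 + 2 * real k ^ 2)"
        by (rule mult_left_mono) auto
      then show ?thesis by (simp add: add.commute)
    qed
    finally have A: "(real k + 1) powr p \<le> e powr (1 - p) * (1 + real k) + e powr (2 - p) * (2 + 2 * real k ^ 2)" .
    have "T k \<le> (e powr (1 - p) * (1 + real k) + e powr (2 - p) * (2 + 2 * real k ^ 2)) * q k"
      unfolding Tq by (rule mult_right_mono[OF A q_nonneg])
    also have "\<dots> = w k" unfolding w_def u_def v_def by (simp add: algebra_simps)
    finally show ?thesis .
  qed
  have T_nonneg: "0 \<le> T k" for k unfolding Tq using q_nonneg by simp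
  have sT: "summable T" using summable_comparison_test'[of w 0 T] sw T_le T_nonneg by auto
  have "suminf T \<le> suminf w" using sT sw T_le by (intro suminf_le) auto
  also have "\<dots> \<le> e powr (1 - p) * (1 + real n) + e powr (2 - p) * (2 + 4 * real n ^ 2 / e)"
    unfolding w_sum sumq using u_le v_le by (intro add_mono mult_left_mono) auto
  also have "e powr (2 - p) = e powr (1 - p) * e"
  proof -
    have "e powr (2 - p) = e powr ((1 - p) + 1)" by simp
    also have "\<dots> = e powr (1 - p) * e powr 1" by (rule powr_add)
    finally show ?thesis using e_pos by simp
  qed
  also have "e powr (1 - p) * (1 + real n) + e powr (1 - p) * e * (2 + 4 * real n ^ 2 / e)
      = e powr (1 - p) * (1 + real n + 2 * e + 4 * real n ^ 2)"
    using e_pos by (simp add: field_simps)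
  also have "\<dots> \<le> e powr (1 - p) * (3 + real n + 4 * real n ^ 2)"
    using e1 by (intro mult_left_mono) auto
  finally have fin_le: "suminf T \<le> (3 + real n + 4 * real n ^ 2) * e powr (1 - p)" by (simp add: mult.commute)
  show "in_dirichlet p (blaschke_prod n \<alpha>) \<and>
        dirichlet_norm_sq p (blaschke_prod n \<alpha>) \<le> (3 + real n + 4 * real n ^ 2) * blaschke_eps n \<alpha> powr (1 - p)"
    using sT fin_le unfolding in_dirichlet_def dirichlet_norm_sq_def T_def[symmetric] e_def by simp
qed

end
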